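(* Let $K\in{\rm Alg}(V)$ be a cubic cyclic Galois field extension of $F$ with ${\rm Gal}(K/F)=\langle\tau\rangle$, and let $A$ be an $F$-algebra with $A\cong K^{(f,g)}$ for some $(f,g)\in{\rm Gl}(V)\times{\rm Gl}(V)$ (equivalently, a $3$-dimensional regular algebra, necessarily a division algebra, whose unital heart is $K$). Then $A$ is isomorphic to an algebra of one of the following eight types, where always $g\in{\rm Gl}(V)$: (1) $K^{({\rm id}+L(y_1)\tau+L(y_2)\tau^2,\,g)}$ with $y_1\in M$, $y_2\in K^\times$, $N(y_1)+N(y_2)-T(\tau(y_1)\tau^2(y_2))\ne-1$; (2) $K^{({\rm id}+L(y_2)\tau^2,\,g)}$ with $y_2\in M$, $N(y_2)\ne-1$; (3) $K^{({\rm id}+L(y_1)\tau,\,g)}$ with $y_1\in M$, $N(y_1)\ne-1$; (4) $K^{({\rm id},\,g)}$ with $g=L(x_1)\tau+L(x_2)\tau^2$, $x_i\in K$, $N_{A_0/F}(x_1t+x_2t^2)\ne0$; (5) $K^{({\rm id},\,g)}$ with $g={\rm id}+L(x_1)\tau+L(x_2)\tau^2$, $x_i\in K$, $N_{A_0/F}(1+x_1t+x_2t^2)\ne0$; (6) $K^{(L(y_1)\tau+L(y_2)\tau^2,\,g)}$ with $y_1\in M$, $y_2\in K^\times$, $N(y_2)\ne-N(y_1)$; (7) $K^{(L(y_2)\tau^2,\,g)}$ with $y_2\in M$; (8) $K^{(L(y_1)\tau,\,g)}$ with $y_1\in M$. Algebras belonging to different types are never isomorphic.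
   Context: $F$ is a field, $V$ a $3$-dimensional $F$-vector space, $K\in{\rm Alg}(V)$ an $F$-algebra structure on $V$ which is a field. $N=N_{K/F}$, $T=T_{K/F}$. $L(x)$ is the map $y\mapsto xy$. For $f,g\in{\rm End}_F(V)$, $K^{(f,g)}$ is $V$ with product $x\cdot y=f(x)g(y)$. $S(K)=\{x\in K:N(x)=1\}$ and $M\subseteq K^\times$ is a fixed set of representatives of $K^\times/S(K)$ containing $1$. $A_0=(K/F,\tau,1)$ is the cyclic algebra (free left $K$-module with basis $1,t,t^2$, $tx=\tau(x)t$, $t^3=1$) with reduced norm $N_{A_0/F}$. *)

theory Defs
  imports Main
begin

text \<open>The 3-dimensional F-vector space V is identified with the carrier
of the field K (a type of class field); the base field F is a subfield F of K
(the scalars c acting on V as c*x).\<close>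

definition is_subfield :: "'k::field set \<Rightarrow> bool" where
  "is_subfield F \<longleftrightarrow> 0 \<in> F \<and> 1 \<in> F \<and>
     (\<forall>a\<in>F. \<forall>b\<in>F. a + b \<in> F \<and> a * b \<in> F \<and> - a \<in> F) \<and>
     (\<forall>a\<in>F. a \<noteq> 0 \<longrightarrow> inverse a \<in> F)"

definition dim3_over :: "'k::field set \<Rightarrow> bool" where
  "dim3_over F \<longleftrightarrow> (\<exists>b1 b2 b3. \<forall>x. \<exists>!c. fst c \<in> F \<and> fst (snd c) \<in> F \<and> snd (snd c) \<in> F \<and>
       x = fst c * b1 + fst (snd c) * b2 + snd (snd c) * b3)"

definition F_linear :: "'k::field set \<Rightarrow> ('k \<Rightarrow> 'k) \<Rightarrow> bool" where
  "F_linear F f \<longleftrightarrow> (\<forall>x y. f (x + y) = f x + f y) \<and> (\<forall>c\<in>F. \<forall>x. f (c * x) = c * f x)"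

definition GL :: "'k::field set \<Rightarrow> ('k \<Rightarrow> 'k) set" where
  "GL F = {f. F_linear F f \<and> bij f}"

definition Gal :: "'k::field set \<Rightarrow> ('k \<Rightarrow> 'k) set" where
  "Gal F = {\<sigma>. bij \<sigma> \<and> (\<forall>x y. \<sigma> (x + y) = \<sigma> x + \<sigma> y) \<and> (\<forall>x y. \<sigma> (x * y) = \<sigma> x * \<sigma> y)
              \<and> \<sigma> 1 = 1 \<and> (\<forall>c\<in>F. \<sigma> c = c)}"

definition nrm :: "('k::field \<Rightarrow> 'k) \<Rightarrow> 'k \<Rightarrow> 'k" where
  "nrm \<tau> x = x * \<tau> x * \<tau> (\<tau> x)"

definition trc :: "('k::field \<Rightarrow> 'k) \<Rightarrow> 'k \<Rightarrow> 'k" where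
  "trc \<tau> x = x + \<tau> x + \<tau> (\<tau> x)"

definition Lm :: "'k::field \<Rightarrow> 'k \<Rightarrow> 'k" where
  "Lm a = (\<lambda>y. a * y)"

text \<open>M is a set of representatives of K^x / S(K) containing 1, S(K) = {x. N x = 1}.\<close>
definition reps :: "('k::field \<Rightarrow> 'k) \<Rightarrow> 'k set \<Rightarrow> bool" where
  "reps \<tau> M \<longleftrightarrow> 1 \<in> M \<and> 0 \<notin> M \<and>
     (\<forall>x. x \<noteq> 0 \<longrightarrow> (\<exists>!m. m \<in> M \<and> nrm \<tau> (x * inverse m) = 1))"

text \<open>Determinant of a 3x3 matrix (rows (a,b,c),(d,e,f),(g,h,i)).\<close>
definition det3 :: "'k::field \<Rightarrow> 'k \<Rightarrow> 'k \<Rightarrow> 'k \<Rightarrow> 'k \<Rightarrow> 'k \<Rightarrow> 'k \<Rightarrow> 'k \<Rightarrow> 'k \<Rightarrow> 'k" where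
  "det3 a b c d e f g h i = a*e*i + b*f*g + c*d*h - c*e*g - b*d*i - a*f*h"

text \<open>Reduced norm of x0 + x1 t + x2 t^2 in A0 = (K/F, tau, 1): the determinant of
the image under the standard splitting A0 \<otimes>_F K = M_3(K), i.e. of the matrix
rows (x0, x1, x2), (tau x2, tau x0, tau x1), (tau^2 x1, tau^2 x2, tau^2 x0).\<close>
definition nrd_A0 :: "('k::field \<Rightarrow> 'k) \<Rightarrow> 'k \<Rightarrow> 'k \<Rightarrow> 'k \<Rightarrow> 'k" where
  "nrd_A0 \<tau> x0 x1 x2 = det3 x0 x1 x2 (\<tau> x2) (\<tau> x0) (\<tau> x1)
                          (\<tau> (\<tau> x1)) (\<tau> (\<tau> x2)) (\<tau> (\<tau> x0))"

definition twist :: "('k::field \<Rightarrow> 'k) \<Rightarrow> ('k \<Rightarrow> 'k) \<Rightarrow> 'k \<Rightarrow> 'k \<Rightarrow> 'k" where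
  "twist f g = (\<lambda>x y. f x * g y)"

definition alg_iso :: "'k::field set \<Rightarrow> ('k \<Rightarrow> 'k \<Rightarrow> 'k) \<Rightarrow> ('k \<Rightarrow> 'k \<Rightarrow> 'k) \<Rightarrow> bool" where
  "alg_iso F m1 m2 \<longleftrightarrow> (\<exists>\<phi>. \<phi> \<in> GL F \<and> (\<forall>x y. \<phi> (m1 x y) = m2 (\<phi> x) (\<phi> y)))"

definition of_type :: "'k::field set \<Rightarrow> ('k \<Rightarrow> 'k) \<Rightarrow> 'k set \<Rightarrow> nat \<Rightarrow> ('k \<Rightarrow> 'k \<Rightarrow> 'k) \<Rightarrow> bool" where
  "of_type F \<tau> M i B \<longleftrightarrow> (\<exists>g \<in> GL F.
     (i = 1 \<and> (\<exists>y1 y2. y1 \<in> M \<and> y2 \<noteq> 0 \<and>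
        nrm \<tau> y1 + nrm \<tau> y2 - trc \<tau> (\<tau> y1 * \<tau> (\<tau> y2)) \<noteq> -1 \<and>
        B = twist (\<lambda>x. x + y1 * \<tau> x + y2 * \<tau> (\<tau> x)) g)) \<or>
     (i = 2 \<and> (\<exists>y2. y2 \<in> M \<and> nrm \<tau> y2 \<noteq> -1 \<and>
        B = twist (\<lambda>x. x + y2 * \<tau> (\<tau> x)) g)) \<or>
     (i = 3 \<and> (\<exists>y1. y1 \<in> M \<and> nrm \<tau> y1 \<noteq> -1 \<and>
        B = twist (\<lambda>x. x + y1 * \<tau> x) g)) \<or>
     (i = 4 \<and> (\<exists>x1 x2. g = (\<lambda>x. x1 * \<tau> x + x2 * \<tau> (\<tau> x)) \<and>
        nrd_A0 \<tau> 0 x1 x2 \<noteq> 0 \<and> B = twist id g)) \<or>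
     (i = 5 \<and> (\<exists>x1 x2. g = (\<lambda>x. x + x1 * \<tau> x + x2 * \<tau> (\<tau> x)) \<and>
        nrd_A0 \<tau> 1 x1 x2 \<noteq> 0 \<and> B = twist id g)) \<or>
     (i = 6 \<and> (\<exists>y1 y2. y1 \<in> M \<and> y2 \<noteq> 0 \<and> nrm \<tau> y2 \<noteq> - nrm \<tau> y1 \<and>
        B = twist (\<lambda>x. y1 * \<tau> x + y2 * \<tau> (\<tau> x)) g)) \<or>
     (i = 7 \<and> (\<exists>y2. y2 \<in> M \<and> B = twist (\<lambda>x. y2 * \<tau> (\<tau> x)) g)) \<or>
     (i = 8 \<and> (\<exists>y1. y1 \<in> M \<and> B = twist (\<lambda>x. y1 * \<tau> x) g)))"

end

theory Submission imports Defs begin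

lemma det3_mult:
  fixes a00 a01 a02 a10 a11 a12 a20 a21 a22 b00 b01 b02 b10 b11 b12 b20 b21 b22 :: "'a::field"
  shows "det3 (a00*b00+a01*b10+a02*b20) (a00*b01+a01*b11+a02*b21) (a00*b02+a01*b12+a02*b22)
              (a10*b00+a11*b10+a12*b20) (a10*b01+a11*b11+a12*b21) (a10*b02+a11*b12+a12*b22)
              (a20*b00+a21*b10+a22*b20) (a20*b01+a21*b11+a22*b21) (a20*b02+a21*b12+a22*b22)
       = det3 a00 a01 a02 a10 a11 a12 a20 a21 a22 * det3 b00 b01 b02 b10 b11 b12 b20 b21 b22"
  unfolding det3_def by algebra

lemma solve3:
  fixes m00 m01 m02 m10 m11 m12 m20 m21 m22 v0 v1 v2 :: "'a::field"
  assumes nz: "m00 \<noteq> 0"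
  and inj: "\<And>a0 a1 a2. a0*m00+a1*m10+a2*m20 = 0 \<Longrightarrow> a0*m01+a1*m11+a2*m21 = 0 \<Longrightarrow>
              a0*m02+a1*m12+a2*m22 = 0 \<Longrightarrow> a0 = 0 \<and> a1 = 0 \<and> a2 = 0"
  shows "\<exists>a0 a1 a2. a0*m00+a1*m10+a2*m20 = v0 \<and> a0*m01+a1*m11+a2*m21 = v1 \<and> a0*m02+a1*m12+a2*m22 = v2"
proof -
  define D where "D = det3 m00 m01 m02 m10 m11 m12 m20 m21 m22"
  define A00 where "A00 = m11*m22 - m12*m21"
  define A01 where "A01 = m02*m21 - m01*m22"
  define A02 where "A02 = m01*m12 - m02*m11"
  define A10 where "A10 = m12*m20 - m10*m22"
  define A11 where "A11 = m00*m22 - m02*m20"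
  define A12 where "A12 = m02*m10 - m00*m12"
  define A20 where "A20 = m10*m21 - m11*m20"
  define A21 where "A21 = m01*m20 - m00*m21"
  define A22 where "A22 = m00*m11 - m01*m10"
  note defs = D_def det3_def A00_def A01_def A02_def A10_def A11_def A12_def A20_def A21_def A22_def
  have i00: "A00*m00+A01*m10+A02*m20 = D" unfolding defs by algebra
  have i01: "A00*m01+A01*m11+A02*m21 = 0" unfolding defs by algebra
  have i02: "A00*m02+A01*m12+A02*m22 = 0" unfolding defs by algebra
  have i10: "A10*m00+A11*m10+A12*m20 = 0" unfolding defs by algebra
  have i11: "A10*m01+A11*m11+A12*m21 = D" unfolding defs by algebra
  have i12: "A10*m02+A11*m12+A12*m22 = 0" unfolding defs by algebra
  have i20: "A20*m00+A21*m10+A22*m20 = 0" unfolding defs by algebra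
  have i21: "A20*m01+A21*m11+A22*m21 = 0" unfolding defs by algebra
  have i22: "A20*m02+A21*m12+A22*m22 = D" unfolding defs by algebra
  show ?thesis
  proof (cases "D = 0")
    case False
    define iD where "iD = inverse D"
    have DD: "D * iD = 1" using False unfolding iD_def by simp
    define x0 where "x0 = (v0*A00+v1*A10+v2*A20)*iD"
    define x1 where "x1 = (v0*A01+v1*A11+v2*A21)*iD"
    define x2 where "x2 = (v0*A02+v1*A12+v2*A22)*iD"
    have e0: "x0*m00+x1*m10+x2*m20 = iD*(v0*(A00*m00+A01*m10+A02*m20) + v1*(A10*m00+A11*m10+A12*m20) + v2*(A20*m00+A21*m10+A22*m20))"
      unfolding x0_def x1_def x2_def by algebra
    have e1: "x0*m01+x1*m11+x2*m21 = iD*(v0*(A00*m01+A01*m11+A02*m21) + v1*(A10*m01+A11*m11+A12*m21) + v2*(A20*m01+A21*m11+A22*m21))"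
      unfolding x0_def x1_def x2_def by algebra
    have e2: "x0*m02+x1*m12+x2*m22 = iD*(v0*(A00*m02+A01*m12+A02*m22) + v1*(A10*m02+A11*m12+A12*m22) + v2*(A20*m02+A21*m12+A22*m22))"
      unfolding x0_def x1_def x2_def by algebra
    have "x0*m00+x1*m10+x2*m20 = v0" proof - have "iD*(v0*D) = v0*(D*iD)" by (simp add: algebra_simps) thus ?thesis using DD e0 i00 i10 i20 by simp qed
    moreover have "x0*m01+x1*m11+x2*m21 = v1" proof - have "iD*(v1*D) = v1*(D*iD)" by (simp add: algebra_simps) thus ?thesis using DD e1 i01 i11 i21 by simp qed
    moreover have "x0*m02+x1*m12+x2*m22 = v2" proof - have "iD*(v2*D) = v2*(D*iD)" by (simp add: algebra_simps) thus ?thesis using DD e2 i02 i12 i22 by simp qed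
    ultimately show ?thesis by blast
  next
    case True
    show ?thesis
    proof (cases "A12 = 0 \<and> A22 = 0")
      case True
      have "m10*m00+(-m00)*m10+0*m20 = 0" by simp
      moreover have "m10*m01+(-m00)*m11+0*m21 = 0" using True unfolding A22_def by (simp add: algebra_simps)
      moreover have "m10*m02+(-m00)*m12+0*m22 = 0" using True unfolding A12_def by (simp add: algebra_simps)
      ultimately have "-m00 = 0" using inj by blast
      with nz show ?thesis by simp
    next
      case False
      have r1: "A10 = 0 \<and> A11 = 0 \<and> A12 = 0" using inj[OF i10 _ i12] i11 True by simp
      have r2: "A20 = 0 \<and> A21 = 0 \<and> A22 = 0" using inj[OF i20 i21] i22 True by simp
      from False r1 r2 show ?thesis by simp
    qed
  qed
qed

definition Op :: "('k::field \<Rightarrow> 'k) \<Rightarrow> 'k \<Rightarrow> 'k \<Rightarrow> 'k \<Rightarrow> 'k \<Rightarrow> 'k" where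
  "Op t a0 a1 a2 = (\<lambda>x. a0 * x + a1 * t x + a2 * t (t x))"

lemma two_char:
  fixes \<rho> :: "'k::field \<Rightarrow> 'k"
  assumes mult: "\<And>x y. \<rho> (x*y) = \<rho> x * \<rho> y" and one: "\<rho> 1 = 1"
    and ne: "\<rho> y0 \<noteq> y0"
    and h: "\<And>x. b0 * x + b1 * \<rho> x = 0"
  shows "b0 = 0 \<and> b1 = 0"
proof -
  have e1: "b0 * y0 + b1 * \<rho> y0 = 0" using h[of y0] .
  have e2: "b0 + b1 = 0" using h[of 1] one by simp
  have "b1 * (\<rho> y0 - y0) = (b0 * y0 + b1 * \<rho> y0) - (b0 + b1) * y0" by (simp add: algebra_simps)
  also have "\<dots> = 0" using e1 e2 by simp
  finally have "b1 = 0" using ne by simp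
  thus ?thesis using e2 by simp
qed

lemma bij_scale: "(c::'k::field) \<noteq> 0 \<Longrightarrow> bij (\<lambda>x. c*x)"
  by (rule bijI) (auto simp: inj_def intro!: surjI[of _ "\<lambda>x. x/c"])

lemma F_linear_comp: "F_linear F f \<Longrightarrow> F_linear F g \<Longrightarrow> F_linear F (f \<circ> g)"
  unfolding F_linear_def by simp

lemma GL_comp: "f \<in> GL F \<Longrightarrow> g \<in> GL F \<Longrightarrow> f \<circ> g \<in> GL F"
  unfolding GL_def by (auto intro: F_linear_comp bij_comp)

lemma GL_scale: assumes "(c::'k::field) \<noteq> 0" shows "(\<lambda>x. c*x) \<in> GL F"
proof -
  have "bij (\<lambda>x. c*x)" using assms by (rule bij_scale)
  thus ?thesis unfolding GL_def F_linear_def by (simp add: distrib_left mult.left_commute)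
qed

lemma GL_inv: assumes "f \<in> GL F" shows "inv f \<in> GL F"
proof -
  have l: "F_linear F f" and b: "bij f" using assms by (auto simp: GL_def)
  have fi: "f (inv f x) = x" for x using b by (simp add: bij_is_surj surj_f_inv_f)
  have if_: "inv f (f x) = x" for x using b by (simp add: bij_is_inj)
  have "F_linear F (inv f)" unfolding F_linear_def
  proof (intro conjI allI ballI)
    fix x y show "inv f (x + y) = inv f x + inv f y"
      using l if_[of "inv f x + inv f y"] by (simp add: F_linear_def fi)
  next
    fix c x assume "c \<in> F" thus "inv f (c * x) = c * inv f x"
      using l if_[of "c * inv f x"] by (simp add: F_linear_def fi)
  qed
  thus ?thesis using b by (simp add: GL_def bij_imp_bij_inv)
qed

lemma alg_iso_trans: "alg_iso F A B \<Longrightarrow> alg_iso F B C \<Longrightarrow> alg_iso F A C"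
  unfolding alg_iso_def
proof (elim exE conjE)
  fix \<phi> \<psi> assume "\<phi> \<in> GL F" "\<forall>x y. \<phi> (A x y) = B (\<phi> x) (\<phi> y)" "\<psi> \<in> GL F" "\<forall>x y. \<psi> (B x y) = C (\<psi> x) (\<psi> y)"
  thus "\<exists>\<phi>. \<phi> \<in> GL F \<and> (\<forall>x y. \<phi> (A x y) = C (\<phi> x) (\<phi> y))"
    by (intro exI[of _ "\<psi> \<circ> \<phi>"]) (auto intro: GL_comp)
qed

lemma alg_iso_scale:
  assumes "(c::'k::field) \<noteq> 0" "\<alpha> * \<beta> = c"
  shows "alg_iso F (twist f g) (twist (\<lambda>x. \<alpha> * f (x/c)) (\<lambda>x. \<beta> * g (x/c)))"
  unfolding alg_iso_def twist_def
  by (rule exI[of _ "\<lambda>x. c*x"]) (use assms in \<open>auto simp: GL_scale\<close>)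

definition pat :: "nat \<Rightarrow> bool \<times> bool \<times> bool" where
  "pat i = (if i = 1 then (True,True,True) else if i = 2 then (True,False,True)
     else if i = 3 then (True,True,False) else if i = 4 \<or> i = 5 then (True,False,False)
     else if i = 6 then (False,True,True) else if i = 7 then (False,False,True) else (False,True,False))"

lemma pat_inj: "i \<in> {1..8} \<Longrightarrow> j \<in> {1..8} \<Longrightarrow> pat i = pat j \<Longrightarrow> i \<noteq> j \<Longrightarrow> (i = 4 \<and> j = 5) \<or> (i = 5 \<and> j = 4)"
proof -
  assume "i \<in> {1..8}" "j \<in> {1..8}" "pat i = pat j" "i \<noteq> j"
  hence hi: "i = 1 \<or> i = 2 \<or> i = 3 \<or> i = 4 \<or> i = 5 \<or> i = 6 \<or> i = 7 \<or> i = 8"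
    and hj: "j = 1 \<or> j = 2 \<or> j = 3 \<or> j = 4 \<or> j = 5 \<or> j = 6 \<or> j = 7 \<or> j = 8" by auto
  from hi hj \<open>pat i = pat j\<close> \<open>i \<noteq> j\<close> show ?thesis by (elim disjE) (simp_all add: pat_def)
qed

locale cyc =
  fixes F :: "'k::field set" and \<tau> :: "'k \<Rightarrow> 'k" and M :: "'k set"
  assumes sub: "is_subfield F"
    and dim: "dim3_over F"
    and tG: "\<tau> \<in> Gal F"
    and galS: "Gal F = {id, \<tau>, \<tau> \<circ> \<tau>}"
    and card3: "card {id, \<tau>, \<tau> \<circ> \<tau>} = 3"
    and reps: "reps \<tau> M"
begin

lemma t_add: "\<tau> (x + y) = \<tau> x + \<tau> y" using tG by (simp add: Gal_def)
lemma t_mult: "\<tau> (x * y) = \<tau> x * \<tau> y" using tG by (simp add: Gal_def)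
lemma t_one: "\<tau> 1 = 1" using tG by (simp add: Gal_def)
lemma t_bij: "bij \<tau>" using tG by (simp add: Gal_def)
lemma t_F: "c \<in> F \<Longrightarrow> \<tau> c = c" using tG by (simp add: Gal_def)
lemma t_zero: "\<tau> 0 = 0"
proof -
  have "\<tau> 0 + \<tau> 0 = \<tau> 0 + 0" using t_add[of 0 0] by simp
  thus ?thesis by (rule add_left_imp_eq)
qed
lemma t_inj: "\<tau> x = \<tau> y \<longleftrightarrow> x = y" using t_bij by (auto simp: bij_def inj_def)
lemma t_eq0: "\<tau> x = 0 \<longleftrightarrow> x = 0" using t_inj[of x 0] t_zero by simp
lemma t_minus: "\<tau> (- x) = - \<tau> x"
proof -
  have "\<tau> (- x) + \<tau> x = 0" using t_add[of "-x" x] t_zero by simp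
  thus ?thesis by (simp add: eq_neg_iff_add_eq_0)
qed
lemma t_diff: "\<tau> (x - y) = \<tau> x - \<tau> y"
proof -
  have "\<tau> x = \<tau> (x - y) + \<tau> y" using t_add[of "x-y" y] by simp
  thus ?thesis by (simp add: eq_diff_eq)
qed
lemma t_inverse: "\<tau> (inverse x) = inverse (\<tau> x)"
proof (cases "x = 0")
  case True thus ?thesis by (simp add: t_zero)
next
  case False
  have "\<tau> x * \<tau> (inverse x) = 1" using t_mult[of x "inverse x"] False t_one by simp
  thus ?thesis by (rule inverse_unique[symmetric])
qed
lemma t_divide: "\<tau> (x / y) = \<tau> x / \<tau> y" by (simp add: divide_inverse t_mult t_inverse)

lemma distinct3: "id \<noteq> \<tau> \<and> id \<noteq> \<tau> \<circ> \<tau> \<and> \<tau> \<noteq> \<tau> \<circ> \<tau>"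
proof -
  have c2: "card {a, b} \<le> 2" for a b :: "'k \<Rightarrow> 'k" by (simp add: card_insert_if)
  have "id \<noteq> \<tau>"
  proof assume "id = \<tau>" hence "{id, \<tau>, \<tau> \<circ> \<tau>} = {\<tau>, \<tau> \<circ> \<tau>}" by auto
    thus False using card3 c2[of \<tau> "\<tau> \<circ> \<tau>"] by simp qed
  moreover have "id \<noteq> \<tau> \<circ> \<tau>"
  proof assume "id = \<tau> \<circ> \<tau>" hence "{id, \<tau>, \<tau> \<circ> \<tau>} = {\<tau>, \<tau> \<circ> \<tau>}" by auto
    thus False using card3 c2[of \<tau> "\<tau> \<circ> \<tau>"] by simp qed
  moreover have "\<tau> \<noteq> \<tau> \<circ> \<tau>"
  proof assume "\<tau> = \<tau> \<circ> \<tau>" hence "{id, \<tau>, \<tau> \<circ> \<tau>} = {id, \<tau>}" by auto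
    thus False using card3 c2[of id \<tau>] by simp qed
  ultimately show ?thesis by blast
qed

lemma t3: "\<tau> (\<tau> (\<tau> x)) = x"
proof -
  have G: "\<tau> \<circ> \<tau> \<circ> \<tau> \<in> Gal F" using tG unfolding Gal_def by (auto intro: bij_comp)
  hence "\<tau> \<circ> \<tau> \<circ> \<tau> = id \<or> \<tau> \<circ> \<tau> \<circ> \<tau> = \<tau> \<or> \<tau> \<circ> \<tau> \<circ> \<tau> = \<tau> \<circ> \<tau>" using galS by auto
  moreover have "\<tau> \<circ> \<tau> \<circ> \<tau> \<noteq> \<tau>"
  proof
    assume "\<tau> \<circ> \<tau> \<circ> \<tau> = \<tau>"
    hence "\<tau> (\<tau> (\<tau> y)) = \<tau> y" for y by (metis comp_apply)
    hence "\<tau> (\<tau> y) = y" for y by (simp add: t_inj)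
    hence "\<tau> \<circ> \<tau> = id" by auto
    thus False using distinct3 by simp
  qed
  moreover have "\<tau> \<circ> \<tau> \<circ> \<tau> \<noteq> \<tau> \<circ> \<tau>"
  proof
    assume "\<tau> \<circ> \<tau> \<circ> \<tau> = \<tau> \<circ> \<tau>"
    hence "\<tau> (\<tau> (\<tau> y)) = \<tau> (\<tau> y)" for y by (metis comp_apply)
    hence "\<tau> y = y" for y by (simp add: t_inj)
    hence "\<tau> = id" by auto
    thus False using distinct3 by simp
  qed
  ultimately have "\<tau> \<circ> \<tau> \<circ> \<tau> = id" by blast
  thus ?thesis by (metis comp_apply id_apply)
qed

lemma t_ne: "\<exists>y. \<tau> y \<noteq> y" using distinct3 by (metis eq_id_iff)
lemma t2_ne: "\<exists>y. \<tau> (\<tau> y) \<noteq> y"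
proof (rule ccontr)
  assume "\<not> ?thesis" hence "\<tau> \<circ> \<tau> = id" by auto
  thus False using distinct3 by simp
qed
lemma t12_ne: "\<exists>y. \<tau> y \<noteq> \<tau> (\<tau> y)"
proof (rule ccontr)
  assume "\<not> ?thesis" hence "\<tau> y = y" for y by (simp add: t_inj)
  thus False using t_ne by simp
qed

lemma dedekind:
  assumes h: "\<And>x. a0 * x + a1 * \<tau> x + a2 * \<tau> (\<tau> x) = 0"
  shows "a0 = 0 \<and> a1 = 0 \<and> a2 = 0"
proof -
  have step: "a0 * (y - \<tau> (\<tau> y)) * x + a1 * (\<tau> y - \<tau> (\<tau> y)) * \<tau> x = 0" for x y
  proof -
    have "a0 * (x*y) + a1 * \<tau> (x*y) + a2 * \<tau> (\<tau> (x*y)) = 0" by (rule h)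
    hence e1: "a0 * x * y + a1 * \<tau> x * \<tau> y + a2 * \<tau> (\<tau> x) * \<tau> (\<tau> y) = 0"
      by (simp add: t_mult mult.assoc)
    have e2: "(a0 * x + a1 * \<tau> x + a2 * \<tau> (\<tau> x)) * \<tau> (\<tau> y) = 0" using h by simp
    have "a0 * (y - \<tau> (\<tau> y)) * x + a1 * (\<tau> y - \<tau> (\<tau> y)) * \<tau> x =
       (a0 * x * y + a1 * \<tau> x * \<tau> y + a2 * \<tau> (\<tau> x) * \<tau> (\<tau> y)) - (a0 * x + a1 * \<tau> x + a2 * \<tau> (\<tau> x)) * \<tau> (\<tau> y)"
      by (simp add: algebra_simps)
    also have "\<dots> = 0" using e1 e2 by simp
    finally show ?thesis .
  qed
  obtain y0 where y0: "\<tau> y0 \<noteq> \<tau> (\<tau> y0)" using t12_ne by blast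
  obtain z0 where z0: "\<tau> z0 \<noteq> z0" using t_ne by blast
  have "a1 * (\<tau> y0 - \<tau> (\<tau> y0)) = 0"
    using two_char[of \<tau> z0 "a0 * (y0 - \<tau> (\<tau> y0))" "a1 * (\<tau> y0 - \<tau> (\<tau> y0))"] t_mult t_one z0 step
    by blast
  hence a1: "a1 = 0" using y0 by simp
  obtain w0 where w0: "\<tau> (\<tau> w0) \<noteq> w0" using t2_ne by blast
  have "a0 = 0 \<and> a2 = 0"
    using two_char[of "\<lambda>x. \<tau> (\<tau> x)" w0 a0 a2] t_mult t_one w0 h a1 by simp
  thus ?thesis using a1 by simp
qed

lemma Op_eq: "Op \<tau> a0 a1 a2 = Op \<tau> b0 b1 b2 \<Longrightarrow> a0 = b0 \<and> a1 = b1 \<and> a2 = b2"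
proof -
  assume e: "Op \<tau> a0 a1 a2 = Op \<tau> b0 b1 b2"
  have "(a0 - b0) * x + (a1 - b1) * \<tau> x + (a2 - b2) * \<tau> (\<tau> x) = 0" for x
  proof -
    have "(a0 - b0) * x + (a1 - b1) * \<tau> x + (a2 - b2) * \<tau> (\<tau> x) = Op \<tau> a0 a1 a2 x - Op \<tau> b0 b1 b2 x"
      unfolding Op_def by (simp add: algebra_simps)
    thus ?thesis using e by simp
  qed
  from dedekind[OF this] show ?thesis by simp
qed

lemma Op_lin: "F_linear F (Op \<tau> a0 a1 a2)"
  unfolding F_linear_def Op_def
proof (intro conjI allI ballI)
  fix x y show "a0 * (x + y) + a1 * \<tau> (x + y) + a2 * \<tau> (\<tau> (x + y)) =
    a0 * x + a1 * \<tau> x + a2 * \<tau> (\<tau> x) + (a0 * y + a1 * \<tau> y + a2 * \<tau> (\<tau> y))"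
    by (simp add: t_add algebra_simps)
next
  fix c x assume "c \<in> F"
  thus "a0 * (c * x) + a1 * \<tau> (c * x) + a2 * \<tau> (\<tau> (c * x)) = c * (a0 * x + a1 * \<tau> x + a2 * \<tau> (\<tau> x))"
    by (simp add: t_mult t_F algebra_simps)
qed

lemma Op_comp: "Op \<tau> a0 a1 a2 (Op \<tau> h0 h1 h2 x) =
   Op \<tau> (a0*h0 + a1*\<tau> h2 + a2*\<tau>(\<tau> h1)) (a0*h1 + a1*\<tau> h0 + a2*\<tau>(\<tau> h2)) (a0*h2 + a1*\<tau> h1 + a2*\<tau>(\<tau> h0)) x"
  unfolding Op_def by (simp add: t_add t_mult t3 distrib_left) algebra


lemma basis:
  "\<exists>b1 b2 b3. b1 \<noteq> 0 \<and> (\<forall>x. \<exists>c1 c2 c3. c1 \<in> F \<and> c2 \<in> F \<and> c3 \<in> F \<and> x = c1*b1 + c2*b2 + c3*b3)"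
proof -
  obtain b1 b2 b3 where H: "\<forall>x. \<exists>!c. fst c \<in> F \<and> fst (snd c) \<in> F \<and> snd (snd c) \<in> F \<and>
       x = fst c * b1 + fst (snd c) * b2 + snd (snd c) * b3" using dim unfolding dim3_over_def by blast
  have F01: "0 \<in> F" "1 \<in> F" using sub unfolding is_subfield_def by auto
  have nz: "b1 \<noteq> 0"
  proof
    assume b: "b1 = 0"
    have "\<exists>!c. fst c \<in> F \<and> fst (snd c) \<in> F \<and> snd (snd c) \<in> F \<and>
       (0::'k) = fst c * b1 + fst (snd c) * b2 + snd (snd c) * b3" using H by blast
    moreover have "fst (0::'k,0::'k,0::'k) \<in> F \<and> fst (snd (0::'k,0::'k,0::'k)) \<in> F \<and> snd (snd (0::'k,0::'k,0::'k)) \<in> F \<and>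
       (0::'k) = fst (0::'k,0::'k,0::'k) * b1 + fst (snd (0::'k,0::'k,0::'k)) * b2 + snd (snd (0::'k,0::'k,0::'k)) * b3"
      using F01 by simp
    moreover have "fst (1::'k,0::'k,0::'k) \<in> F \<and> fst (snd (1::'k,0::'k,0::'k)) \<in> F \<and> snd (snd (1::'k,0::'k,0::'k)) \<in> F \<and>
       (0::'k) = fst (1::'k,0::'k,0::'k) * b1 + fst (snd (1::'k,0::'k,0::'k)) * b2 + snd (snd (1::'k,0::'k,0::'k)) * b3"
      using F01 b by simp
    ultimately have "(0::'k,0::'k,0::'k) = (1,0,0)" by (metis (no_types, lifting))
    thus False by simp
  qed
  moreover have rp: "\<exists>c1 c2 c3. c1 \<in> F \<and> c2 \<in> F \<and> c3 \<in> F \<and> x = c1*b1 + c2*b2 + c3*b3" for x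
    using H by (metis (no_types, lifting))
  show ?thesis using nz rp by blast
qed

lemma span: assumes l: "F_linear F f" shows "\<exists>a0 a1 a2. f = Op \<tau> a0 a1 a2"
proof -
  obtain b1 b2 b3 where nz: "b1 \<noteq> 0" and rep: "\<forall>x. \<exists>c1 c2 c3. c1 \<in> F \<and> c2 \<in> F \<and> c3 \<in> F \<and> x = c1*b1 + c2*b2 + c3*b3"
    using basis by blast
  have ext0: "Op \<tau> a0 a1 a2 x = 0" if "Op \<tau> a0 a1 a2 b1 = 0" "Op \<tau> a0 a1 a2 b2 = 0" "Op \<tau> a0 a1 a2 b3 = 0" for a0 a1 a2 x
  proof -
    obtain c1 c2 c3 where c: "c1 \<in> F" "c2 \<in> F" "c3 \<in> F" "x = c1*b1 + c2*b2 + c3*b3" using rep by blast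
    have "Op \<tau> a0 a1 a2 x = c1 * Op \<tau> a0 a1 a2 b1 + c2 * Op \<tau> a0 a1 a2 b2 + c3 * Op \<tau> a0 a1 a2 b3"
      using Op_lin[of a0 a1 a2] c unfolding F_linear_def by simp
    thus ?thesis using that by simp
  qed
  have "\<exists>a0 a1 a2. a0*b1 + a1*\<tau> b1 + a2*\<tau> (\<tau> b1) = f b1 \<and> a0*b2 + a1*\<tau> b2 + a2*\<tau> (\<tau> b2) = f b2 \<and>
      a0*b3 + a1*\<tau> b3 + a2*\<tau> (\<tau> b3) = f b3"
  proof (rule solve3[OF nz])
    fix a0 a1 a2
    assume "a0 * b1 + a1 * \<tau> b1 + a2 * \<tau> (\<tau> b1) = 0" "a0 * b2 + a1 * \<tau> b2 + a2 * \<tau> (\<tau> b2) = 0"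
      "a0 * b3 + a1 * \<tau> b3 + a2 * \<tau> (\<tau> b3) = 0"
    hence "Op \<tau> a0 a1 a2 x = 0" for x using ext0[of a0 a1 a2 x] by (simp add: Op_def)
    thus "a0 = 0 \<and> a1 = 0 \<and> a2 = 0" by (intro dedekind) (simp add: Op_def)
  qed
  then obtain a0 a1 a2 where a: "a0*b1 + a1*\<tau> b1 + a2*\<tau> (\<tau> b1) = f b1" "a0*b2 + a1*\<tau> b2 + a2*\<tau> (\<tau> b2) = f b2"
      "a0*b3 + a1*\<tau> b3 + a2*\<tau> (\<tau> b3) = f b3" by blast
  have "f x = Op \<tau> a0 a1 a2 x" for x
  proof -
    obtain c1 c2 c3 where c: "c1 \<in> F" "c2 \<in> F" "c3 \<in> F" "x = c1*b1 + c2*b2 + c3*b3" using rep by blast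
    have "Op \<tau> a0 a1 a2 x = c1 * Op \<tau> a0 a1 a2 b1 + c2 * Op \<tau> a0 a1 a2 b2 + c3 * Op \<tau> a0 a1 a2 b3"
      using Op_lin[of a0 a1 a2] c unfolding F_linear_def by simp
    moreover have "f x = c1 * f b1 + c2 * f b2 + c3 * f b3"
      using l c unfolding F_linear_def by simp
    ultimately show ?thesis using a by (simp add: Op_def)
  qed
  thus ?thesis by blast
qed

lemma nrd_mult: "nrd_A0 \<tau> (a0*h0 + a1*\<tau> h2 + a2*\<tau>(\<tau> h1)) (a0*h1 + a1*\<tau> h0 + a2*\<tau>(\<tau> h2)) (a0*h2 + a1*\<tau> h1 + a2*\<tau>(\<tau> h0))
   = nrd_A0 \<tau> a0 a1 a2 * nrd_A0 \<tau> h0 h1 h2"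
  unfolding nrd_A0_def det3_def by (simp only: t_add t_mult t3) algebra

lemma nrd_one: "nrd_A0 \<tau> 1 0 0 = 1"
  unfolding nrd_A0_def det3_def by (simp add: t_zero t_one)

definition adjw0 where "adjw0 a0 a1 a2 = \<tau> a0 * \<tau> (\<tau> a0) - \<tau> a1 * \<tau> (\<tau> a2)"
definition adjw1 where "adjw1 a0 a1 a2 = a2 * \<tau> (\<tau> a2) - a1 * \<tau> (\<tau> a0)"
definition adjw2 where "adjw2 a0 a1 a2 = a1 * \<tau> a1 - a2 * \<tau> a0"

lemma adj_r: "Op \<tau> a0 a1 a2 (Op \<tau> (adjw0 a0 a1 a2) (adjw1 a0 a1 a2) (adjw2 a0 a1 a2) x) = nrd_A0 \<tau> a0 a1 a2 * x"
  unfolding Op_comp unfolding Op_def adjw0_def adjw1_def adjw2_def nrd_A0_def det3_def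
  by (simp only: t_add t_mult t3 t_diff) algebra

lemma adj_l: "Op \<tau> (adjw0 a0 a1 a2) (adjw1 a0 a1 a2) (adjw2 a0 a1 a2) (Op \<tau> a0 a1 a2 x) = nrd_A0 \<tau> a0 a1 a2 * x"
  unfolding Op_comp unfolding Op_def adjw0_def adjw1_def adjw2_def nrd_A0_def det3_def
  by algebra

lemma nrd_bij: assumes "nrd_A0 \<tau> a0 a1 a2 \<noteq> 0" shows "bij (Op \<tau> a0 a1 a2)"
proof (rule bijI)
  let ?W = "Op \<tau> (adjw0 a0 a1 a2) (adjw1 a0 a1 a2) (adjw2 a0 a1 a2)"
  show "inj (Op \<tau> a0 a1 a2)"
  proof (rule injI)
    fix x y assume "Op \<tau> a0 a1 a2 x = Op \<tau> a0 a1 a2 y"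
    hence "?W (Op \<tau> a0 a1 a2 x) = ?W (Op \<tau> a0 a1 a2 y)" by simp
    thus "x = y" using assms by (simp add: adj_l)
  qed
  show "surj (Op \<tau> a0 a1 a2)"
  proof (rule surjI)
    fix x show "Op \<tau> a0 a1 a2 (?W (x / nrd_A0 \<tau> a0 a1 a2)) = x" using assms by (simp add: adj_r)
  qed
qed

lemma bij_nrd: assumes b: "bij (Op \<tau> a0 a1 a2)" shows "nrd_A0 \<tau> a0 a1 a2 \<noteq> 0"
proof -
  let ?f = "Op \<tau> a0 a1 a2"
  have "?f \<in> GL F" using b Op_lin by (simp add: GL_def)
  hence "inv ?f \<in> GL F" by (rule GL_inv)
  hence "F_linear F (inv ?f)" by (simp add: GL_def)
  then obtain h0 h1 h2 where h: "inv ?f = Op \<tau> h0 h1 h2" using span by blast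
  have "?f (inv ?f x) = x" for x using b by (simp add: bij_is_surj surj_f_inv_f)
  hence "Op \<tau> (a0*h0 + a1*\<tau> h2 + a2*\<tau>(\<tau> h1)) (a0*h1 + a1*\<tau> h0 + a2*\<tau>(\<tau> h2)) (a0*h2 + a1*\<tau> h1 + a2*\<tau>(\<tau> h0)) x
      = Op \<tau> 1 0 0 x" for x
    unfolding h Op_comp[symmetric] by (simp add: Op_def)
  hence "Op \<tau> (a0*h0 + a1*\<tau> h2 + a2*\<tau>(\<tau> h1)) (a0*h1 + a1*\<tau> h0 + a2*\<tau>(\<tau> h2)) (a0*h2 + a1*\<tau> h1 + a2*\<tau>(\<tau> h0))
      = Op \<tau> 1 0 0" by blast
  from Op_eq[OF this] have "nrd_A0 \<tau> a0 a1 a2 * nrd_A0 \<tau> h0 h1 h2 = 1"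
    using nrd_mult[of a0 h0 a1 h2 a2 h1] nrd_one by simp
  thus ?thesis by auto
qed

lemma nrm_mult: "nrm \<tau> (x * y) = nrm \<tau> x * nrm \<tau> y"
  unfolding nrm_def by (simp add: t_mult algebra_simps)
lemma nrm_inverse: "nrm \<tau> (inverse x) = inverse (nrm \<tau> x)"
  unfolding nrm_def by (simp add: t_inverse)
lemma nrm_one: "nrm \<tau> 1 = 1" unfolding nrm_def by (simp add: t_one)

lemma hilbert90a: assumes N: "nrm \<tau> s = 1" shows "\<exists>c. c \<noteq> 0 \<and> c = s * \<tau> c"
proof -
  have "\<not> (\<forall>x. Op \<tau> 1 s (s * \<tau> s) x = 0)"
  proof
    assume "\<forall>x. Op \<tau> 1 s (s * \<tau> s) x = 0"
    hence "(1::'k) = 0" using dedekind[of 1 s "s * \<tau> s"] by (simp add: Op_def)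
    thus False by simp
  qed
  then obtain x where x: "Op \<tau> 1 s (s * \<tau> s) x \<noteq> 0" by blast
  define c where "c = Op \<tau> 1 s (s * \<tau> s) x"
  have "s * \<tau> c = s * \<tau> x + s * \<tau> s * \<tau> (\<tau> x) + (s * \<tau> s * \<tau> (\<tau> s)) * x"
    unfolding c_def Op_def by (simp only: t_add t_mult t3 t_one) algebra
  also have "\<dots> = c"
  proof -
    have N1: "s * \<tau> s * \<tau> (\<tau> s) = 1" using N by (simp add: nrm_def)
    show ?thesis unfolding N1 mult_1_left unfolding c_def Op_def by algebra
  qed
  finally show ?thesis using x c_def by metis
qed

lemma hilbert90b: assumes N: "nrm \<tau> s = 1" shows "\<exists>c. c \<noteq> 0 \<and> c = s * \<tau> (\<tau> c)"
proof -
  have "\<not> (\<forall>x. Op \<tau> 1 (s * \<tau> (\<tau> s)) s x = 0)"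
  proof
    assume "\<forall>x. Op \<tau> 1 (s * \<tau> (\<tau> s)) s x = 0"
    hence "(1::'k) = 0" using dedekind[of 1 "s * \<tau> (\<tau> s)" s] by (simp add: Op_def)
    thus False by simp
  qed
  then obtain x where x: "Op \<tau> 1 (s * \<tau> (\<tau> s)) s x \<noteq> 0" by blast
  define c where "c = Op \<tau> 1 (s * \<tau> (\<tau> s)) s x"
  have "s * \<tau> (\<tau> c) = s * \<tau> (\<tau> x) + s * \<tau> (\<tau> s) * \<tau> x + (s * \<tau> s * \<tau> (\<tau> s)) * x"
    unfolding c_def Op_def by (simp only: t_add t_mult t3 t_one) algebra
  also have "\<dots> = c"
  proof -
    have N1: "s * \<tau> s * \<tau> (\<tau> s) = 1" using N by (simp add: nrm_def)
    show ?thesis unfolding N1 mult_1_left unfolding c_def Op_def by algebra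
  qed
  finally show ?thesis using x c_def by metis
qed


lemma iso_pattern:
  assumes phi: "\<phi> \<in> GL F" and H: "\<And>x y. \<phi> (f x * g y) = f' (\<phi> x) * g' (\<phi> y)"
    and bf: "bij f" and bg: "bij g"
    and ef: "f = Op \<tau> a0 a1 a2" and ef': "f' = Op \<tau> b0 b1 b2"
  shows "(a0 = 0 \<longleftrightarrow> b0 = 0) \<and> (a1 = 0 \<longleftrightarrow> b1 = 0) \<and> (a2 = 0 \<longleftrightarrow> b2 = 0)"
proof -
  have lin: "F_linear F \<phi>" and bphi: "bij \<phi>" using phi by (auto simp: GL_def)
  have padd: "\<phi> (x + y) = \<phi> x + \<phi> y" for x y using lin by (simp add: F_linear_def)
  have pF: "k \<in> F \<Longrightarrow> \<phi> (k * x) = k * \<phi> x" for k x using lin by (simp add: F_linear_def)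
  have phi0: "\<phi> 0 = 0"
  proof -
    have "\<phi> 0 + \<phi> 0 = \<phi> 0 + 0" using padd[of 0 0] by simp
    thus ?thesis by (rule add_left_imp_eq)
  qed
  have pinj: "\<phi> x = \<phi> y \<Longrightarrow> x = y" for x y using bphi by (auto simp: bij_def inj_def)
  have fi: "f (inv f u) = u" for u using bf by (simp add: bij_is_surj surj_f_inv_f)
  have gi: "g (inv g u) = u" for u using bg by (simp add: bij_is_surj surj_f_inv_f)
  define A where "A u = f' (\<phi> (inv f u))" for u
  define B where "B v = g' (\<phi> (inv g v))" for v
  have HH: "\<phi> (u * v) = A u * B v" for u v using H[of "inv f u" "inv g v"] by (simp add: fi gi A_def B_def)
  define c where "c = \<phi> 1"
  have c_nz: "c \<noteq> 0" using pinj[of 1 0] phi0 c_def by auto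
  have cAB: "c = A 1 * B 1" using HH[of 1 1] c_def by simp
  have A1: "A 1 \<noteq> 0" and B1: "B 1 \<noteq> 0" using c_nz cAB by auto
  have pu: "\<phi> u = A u * B 1" for u using HH[of u 1] by simp
  have pv: "\<phi> v = A 1 * B v" for v using HH[of 1 v] by simp
  define \<sigma> where "\<sigma> u = \<phi> u / c" for u
  have smult: "\<sigma> (x * y) = \<sigma> x * \<sigma> y" for x y
  proof -
    have "\<sigma> (x*y) = A x * B y / c" by (simp add: \<sigma>_def HH)
    also have "\<dots> = (A x * B 1) * (A 1 * B y) / (c * c)" using A1 B1 unfolding cAB by (simp add: field_simps)
    also have "\<dots> = \<sigma> x * \<sigma> y" unfolding \<sigma>_def pu[of x] pv[of y] by simp
    finally show ?thesis .
  qed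
  have sadd: "\<sigma> (x + y) = \<sigma> x + \<sigma> y" for x y by (simp add: \<sigma>_def padd add_divide_distrib)
  have sone: "\<sigma> 1 = 1" using c_nz by (simp add: \<sigma>_def c_def)
  have sF: "k \<in> F \<Longrightarrow> \<sigma> k = k" for k using pF[of k 1] c_nz by (simp add: \<sigma>_def c_def)
  have seq: "\<sigma> = (\<lambda>u. inverse c * u) \<circ> \<phi>" by (rule ext) (simp add: \<sigma>_def divide_inverse mult.commute)
  have sbij: "bij \<sigma>" unfolding seq using bphi bij_scale[of "inverse c"] c_nz by (simp add: bij_comp)
  have "\<sigma> \<in> Gal F" unfolding Gal_def using sbij sadd smult sone sF by blast
  hence scases: "\<sigma> = id \<or> \<sigma> = \<tau> \<or> \<sigma> = \<tau> \<circ> \<tau>" using galS by auto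
  have scomm: "\<sigma> (\<tau> z) = \<tau> (\<sigma> z)" for z using scases by auto
  have s0: "\<sigma> a = 0 \<longleftrightarrow> a = 0" for a
  proof -
    have "\<sigma> 0 = 0" by (simp add: \<sigma>_def phi0)
    moreover have "inj \<sigma>" using sbij by (simp add: bij_is_inj)
    ultimately show ?thesis by (metis injD)
  qed
  have key: "Op \<tau> b0 b1 b2 (c * \<sigma> x) * B 1 = c * \<sigma> (Op \<tau> a0 a1 a2 x)" for x
  proof -
    have "\<phi> (f x * g (inv g 1)) = f' (\<phi> x) * B 1" using H[of x "inv g 1"] by (simp add: B_def)
    moreover have "\<phi> x = c * \<sigma> x" for x using c_nz by (simp add: \<sigma>_def)
    ultimately show ?thesis using gi ef ef' by simp
  qed
  define d0 where "d0 = b0*c*B 1 - c*\<sigma> a0"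
  define d1 where "d1 = b1*\<tau> c*B 1 - c*\<sigma> a1"
  define d2 where "d2 = b2*\<tau> (\<tau> c)*B 1 - c*\<sigma> a2"
  have dz: "d0 * z + d1 * \<tau> z + d2 * \<tau> (\<tau> z) = 0" for z
  proof -
    obtain x where zx: "z = \<sigma> x" using sbij by (metis bij_is_surj surj_f_inv_f)
    have E: "(b0*(c*\<sigma> x) + b1*(\<tau> c*\<tau> (\<sigma> x)) + b2*(\<tau> (\<tau> c)*\<tau> (\<tau> (\<sigma> x)))) * B 1 =
        c*(\<sigma> a0*\<sigma> x + \<sigma> a1*\<tau> (\<sigma> x) + \<sigma> a2*\<tau> (\<tau> (\<sigma> x)))"
      using key[of x] unfolding Op_def by (simp only: t_mult sadd smult scomm)
    show ?thesis unfolding zx d0_def d1_def d2_def using E by algebra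
  qed
  from dedekind[OF dz] have "d0 = 0" "d1 = 0" "d2 = 0" by auto
  hence e0: "b0*c*B 1 = c*\<sigma> a0" and e1: "b1*\<tau> c*B 1 = c*\<sigma> a1" and e2: "b2*\<tau> (\<tau> c)*B 1 = c*\<sigma> a2"
    unfolding d0_def d1_def d2_def by simp_all
  have tc: "\<tau> c \<noteq> 0" "\<tau> (\<tau> c) \<noteq> 0" using c_nz by (simp_all add: t_eq0)
  have "a0 = 0 \<longleftrightarrow> b0 = 0" using e0 c_nz B1 s0[of a0] by (metis mult_eq_0_iff)
  moreover have "a1 = 0 \<longleftrightarrow> b1 = 0" using e1 c_nz tc B1 s0[of a1] by (metis mult_eq_0_iff)
  moreover have "a2 = 0 \<longleftrightarrow> b2 = 0" using e2 c_nz tc B1 s0[of a2] by (metis mult_eq_0_iff)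
  ultimately show ?thesis by blast
qed

lemma nrd_1: "nrd_A0 \<tau> 1 y1 y2 = 1 + (nrm \<tau> y1 + nrm \<tau> y2 - trc \<tau> (\<tau> y1 * \<tau> (\<tau> y2)))"
  unfolding nrd_A0_def det3_def nrm_def trc_def by (simp only: t_one t_mult t3) algebra
lemma nrd_0: "nrd_A0 \<tau> 0 y1 y2 = nrm \<tau> y1 + nrm \<tau> y2"
  unfolding nrd_A0_def det3_def nrm_def by (simp add: t_zero)
lemma nrd_10: "nrd_A0 \<tau> 1 0 y2 = 1 + nrm \<tau> y2"
  unfolding nrd_A0_def det3_def nrm_def by (simp add: t_zero t_one)
lemma nrd_01: "nrd_A0 \<tau> 1 y1 0 = 1 + nrm \<tau> y1"
  unfolding nrd_A0_def det3_def nrm_def by (simp add: t_zero t_one)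
lemma nrm_nz: "y \<noteq> 0 \<Longrightarrow> nrm \<tau> y \<noteq> 0"
  unfolding nrm_def by (simp add: t_eq0)
lemma one_plus: "(1::'k) + e \<noteq> 0 \<longleftrightarrow> e \<noteq> -1"
  by (metis add.commute add_eq_0_iff eq_neg_iff_add_eq_0)
lemma M_nz: "m \<in> M \<Longrightarrow> m \<noteq> 0" using reps unfolding reps_def by auto
lemma GL_bij: "g \<in> GL F \<Longrightarrow> bij g" by (simp add: GL_def)


lemma ot1: "g \<in> GL F \<Longrightarrow> y1 \<in> M \<Longrightarrow> y2 \<noteq> 0 \<Longrightarrow> nrd_A0 \<tau> 1 y1 y2 \<noteq> 0 \<Longrightarrow>
   of_type F \<tau> M 1 (twist (Op \<tau> 1 y1 y2) g)"
  unfolding of_type_def by (rule bexI[of _ g]) (auto simp: nrd_1 one_plus Op_def)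
lemma ot2: "g \<in> GL F \<Longrightarrow> y2 \<in> M \<Longrightarrow> nrd_A0 \<tau> 1 0 y2 \<noteq> 0 \<Longrightarrow>
   of_type F \<tau> M 2 (twist (Op \<tau> 1 0 y2) g)"
  unfolding of_type_def by (rule bexI[of _ g]) (auto simp: nrd_10 one_plus Op_def)
lemma ot3: "g \<in> GL F \<Longrightarrow> y1 \<in> M \<Longrightarrow> nrd_A0 \<tau> 1 y1 0 \<noteq> 0 \<Longrightarrow>
   of_type F \<tau> M 3 (twist (Op \<tau> 1 y1 0) g)"
  unfolding of_type_def by (rule bexI[of _ g]) (auto simp: nrd_01 one_plus Op_def)
lemma ot4: "Op \<tau> 0 x1 x2 \<in> GL F \<Longrightarrow> nrd_A0 \<tau> 0 x1 x2 \<noteq> 0 \<Longrightarrow>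
   of_type F \<tau> M 4 (twist (Op \<tau> 1 0 0) (Op \<tau> 0 x1 x2))"
  unfolding of_type_def
  apply (rule bexI[of _ "Op \<tau> 0 x1 x2"])
   apply (simp add: Op_def)
   apply (rule exI[of _ x1], rule exI[of _ x2])
   apply (simp add: id_def)
  apply assumption
  done
lemma ot5: "Op \<tau> 1 x1 x2 \<in> GL F \<Longrightarrow> nrd_A0 \<tau> 1 x1 x2 \<noteq> 0 \<Longrightarrow>
   of_type F \<tau> M 5 (twist (Op \<tau> 1 0 0) (Op \<tau> 1 x1 x2))"
  unfolding of_type_def
  apply (rule bexI[of _ "Op \<tau> 1 x1 x2"])
   apply (simp add: Op_def)
   apply (rule exI[of _ x1], rule exI[of _ x2])
   apply (simp add: id_def)
  apply assumption
  done
lemma ot6: "g \<in> GL F \<Longrightarrow> y1 \<in> M \<Longrightarrow> y2 \<noteq> 0 \<Longrightarrow> nrd_A0 \<tau> 0 y1 y2 \<noteq> 0 \<Longrightarrow>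
   of_type F \<tau> M 6 (twist (Op \<tau> 0 y1 y2) g)"
  unfolding of_type_def by (rule bexI[of _ g]) (auto simp: nrd_0 eq_neg_iff_add_eq_0 add.commute Op_def)
lemma ot7: "g \<in> GL F \<Longrightarrow> y2 \<in> M \<Longrightarrow> of_type F \<tau> M 7 (twist (Op \<tau> 0 0 y2) g)"
  unfolding of_type_def by (rule bexI[of _ g]) (auto simp: Op_def)
lemma ot8: "g \<in> GL F \<Longrightarrow> y1 \<in> M \<Longrightarrow> of_type F \<tau> M 8 (twist (Op \<tau> 0 y1 0) g)"
  unfolding of_type_def by (rule bexI[of _ g]) (auto simp: Op_def)


definition REP :: "nat \<Rightarrow> ('k \<Rightarrow> 'k \<Rightarrow> 'k) \<Rightarrow> bool" where
  "REP i B \<longleftrightarrow> (\<exists>a0 a1 a2 g. B = twist (Op \<tau> a0 a1 a2) g \<and> bij g \<and> bij (Op \<tau> a0 a1 a2) \<and>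
     (a0 \<noteq> 0, a1 \<noteq> 0, a2 \<noteq> 0) = pat i \<and> (i = 4 \<longrightarrow> (\<exists>x1 x2. g = Op \<tau> 0 x1 x2)) \<and>
     (i = 5 \<longrightarrow> (\<exists>x1 x2. g = Op \<tau> 1 x1 x2)))"

lemma REP_intro: "B = twist (Op \<tau> a0 a1 a2) g \<Longrightarrow> bij g \<Longrightarrow> bij (Op \<tau> a0 a1 a2) \<Longrightarrow>
     (a0 \<noteq> 0, a1 \<noteq> 0, a2 \<noteq> 0) = pat i \<Longrightarrow> (i = 4 \<longrightarrow> (\<exists>x1 x2. g = Op \<tau> 0 x1 x2)) \<Longrightarrow>
     (i = 5 \<longrightarrow> (\<exists>x1 x2. g = Op \<tau> 1 x1 x2)) \<Longrightarrow> REP i B"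
  unfolding REP_def by blast

lemma oneM: "1 \<in> M" using reps unfolding reps_def by auto

lemma type_rep: assumes "of_type F \<tau> M i B" "i \<in> {1..8}" shows "REP i B"
proof -
  have "i \<in> {1,2,3,4,5,6,7,8}" using assms(2) by auto
  moreover {
    assume i: "i = 1"
    obtain g y1 y2 where g: "g \<in> GL F" "y1 \<in> M" "y2 \<noteq> 0"
      "nrm \<tau> y1 + nrm \<tau> y2 - trc \<tau> (\<tau> y1 * \<tau> (\<tau> y2)) \<noteq> -1"
      "B = twist (\<lambda>x. x + y1 * \<tau> x + y2 * \<tau> (\<tau> x)) g" using assms(1) i unfolding of_type_def by auto
    have "bij (Op \<tau> 1 y1 y2)" using g(4) by (intro nrd_bij) (simp add: nrd_1 one_plus)
    hence "REP i B" using g i M_nz[OF g(2)] GL_bij[OF g(1)]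
      by (intro REP_intro[of B 1 y1 y2 g]) (simp_all add: Op_def pat_def)
  }
  moreover {
    assume i: "i = 2"
    obtain g y2 where g: "g \<in> GL F" "y2 \<in> M" "nrm \<tau> y2 \<noteq> -1"
      "B = twist (\<lambda>x. x + y2 * \<tau> (\<tau> x)) g" using assms(1) i unfolding of_type_def by auto
    have "bij (Op \<tau> 1 0 y2)" using g(3) by (intro nrd_bij) (simp add: nrd_10 one_plus)
    hence "REP i B" using g i M_nz[OF g(2)] GL_bij[OF g(1)]
      by (intro REP_intro[of B 1 0 y2 g]) (simp_all add: Op_def pat_def)
  }
  moreover {
    assume i: "i = 3"
    obtain g y1 where g: "g \<in> GL F" "y1 \<in> M" "nrm \<tau> y1 \<noteq> -1"
      "B = twist (\<lambda>x. x + y1 * \<tau> x) g" using assms(1) i unfolding of_type_def by auto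
    have "bij (Op \<tau> 1 y1 0)" using g(3) by (intro nrd_bij) (simp add: nrd_01 one_plus)
    hence "REP i B" using g i M_nz[OF g(2)] GL_bij[OF g(1)]
      by (intro REP_intro[of B 1 y1 0 g]) (simp_all add: Op_def pat_def)
  }
  moreover {
    assume i: "i = 4"
    obtain g x1 x2 where g: "g \<in> GL F" "g = (\<lambda>x. x1 * \<tau> x + x2 * \<tau> (\<tau> x))"
      "B = twist id g" using assms(1) i unfolding of_type_def by auto
    have "bij (Op \<tau> 1 0 0)" by (intro nrd_bij) (simp add: nrd_one)
    moreover have "g = Op \<tau> 0 x1 x2" using g(2) by (simp add: Op_def)
    moreover have "id = Op \<tau> 1 0 0" by (simp add: Op_def id_def)
    ultimately have "REP i B" using g i GL_bij[OF g(1)]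
      by (intro REP_intro[of B 1 0 0 g]) (auto simp: pat_def)
  }
  moreover {
    assume i: "i = 5"
    obtain g x1 x2 where g: "g \<in> GL F" "g = (\<lambda>x. x + x1 * \<tau> x + x2 * \<tau> (\<tau> x))"
      "B = twist id g" using assms(1) i unfolding of_type_def by auto
    have "bij (Op \<tau> 1 0 0)" by (intro nrd_bij) (simp add: nrd_one)
    moreover have "g = Op \<tau> 1 x1 x2" using g(2) by (simp add: Op_def)
    moreover have "id = Op \<tau> 1 0 0" by (simp add: Op_def id_def)
    ultimately have "REP i B" using g i GL_bij[OF g(1)]
      by (intro REP_intro[of B 1 0 0 g]) (auto simp: pat_def)
  }
  moreover {
    assume i: "i = 6"
    obtain g y1 y2 where g: "g \<in> GL F" "y1 \<in> M" "y2 \<noteq> 0" "nrm \<tau> y2 \<noteq> - nrm \<tau> y1"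
      "B = twist (\<lambda>x. y1 * \<tau> x + y2 * \<tau> (\<tau> x)) g" using assms(1) i unfolding of_type_def by auto
    have "nrd_A0 \<tau> 0 y1 y2 \<noteq> 0" using g(4) unfolding nrd_0 by (metis add.commute eq_neg_iff_add_eq_0)
    hence "bij (Op \<tau> 0 y1 y2)" by (rule nrd_bij)
    hence "REP i B" using g i M_nz[OF g(2)] GL_bij[OF g(1)]
      by (intro REP_intro[of B 0 y1 y2 g]) (simp_all add: Op_def pat_def)
  }
  moreover {
    assume i: "i = 7"
    obtain g y2 where g: "g \<in> GL F" "y2 \<in> M"
      "B = twist (\<lambda>x. y2 * \<tau> (\<tau> x)) g" using assms(1) i unfolding of_type_def by auto
    have "nrd_A0 \<tau> 0 0 y2 \<noteq> 0" using M_nz[OF g(2)] nrm_nz unfolding nrd_0 by (simp add: nrm_def t_zero)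
    hence "bij (Op \<tau> 0 0 y2)" by (rule nrd_bij)
    hence "REP i B" using g i M_nz[OF g(2)] GL_bij[OF g(1)]
      by (intro REP_intro[of B 0 0 y2 g]) (simp_all add: Op_def pat_def)
  }
  moreover {
    assume i: "i = 8"
    obtain g y1 where g: "g \<in> GL F" "y1 \<in> M"
      "B = twist (\<lambda>x. y1 * \<tau> x) g" using assms(1) i unfolding of_type_def by auto
    have "nrd_A0 \<tau> 0 y1 0 \<noteq> 0" using M_nz[OF g(2)] nrm_nz unfolding nrd_0 by (simp add: nrm_def t_zero)
    hence "bij (Op \<tau> 0 y1 0)" by (rule nrd_bij)
    hence "REP i B" using g i M_nz[OF g(2)] GL_bij[OF g(1)]
      by (intro REP_intro[of B 0 y1 0 g]) (simp_all add: Op_def pat_def)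
  }
  ultimately show ?thesis by blast
qed


lemma noniso:
  assumes ij: "i \<in> {1..8}" "j \<in> {1..8}" "i \<noteq> j"
    and t1: "of_type F \<tau> M i B1" and t2: "of_type F \<tau> M j B2"
  shows "\<not> alg_iso F B1 B2"
proof
  assume iso: "alg_iso F B1 B2"
  obtain a0 a1 a2 g where R1: "B1 = twist (Op \<tau> a0 a1 a2) g" "bij g" "bij (Op \<tau> a0 a1 a2)"
     "(a0 \<noteq> 0, a1 \<noteq> 0, a2 \<noteq> 0) = pat i" "i = 4 \<longrightarrow> (\<exists>x1 x2. g = Op \<tau> 0 x1 x2)"
     "i = 5 \<longrightarrow> (\<exists>x1 x2. g = Op \<tau> 1 x1 x2)"
    using type_rep[OF t1 ij(1)] unfolding REP_def by blast
  obtain b0 b1 b2 g' where R2: "B2 = twist (Op \<tau> b0 b1 b2) g'" "bij g'" "bij (Op \<tau> b0 b1 b2)"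
     "(b0 \<noteq> 0, b1 \<noteq> 0, b2 \<noteq> 0) = pat j" "j = 4 \<longrightarrow> (\<exists>x1 x2. g' = Op \<tau> 0 x1 x2)"
     "j = 5 \<longrightarrow> (\<exists>x1 x2. g' = Op \<tau> 1 x1 x2)"
    using type_rep[OF t2 ij(2)] unfolding REP_def by blast
  obtain \<phi> where phi: "\<phi> \<in> GL F" and H: "\<And>x y. \<phi> (B1 x y) = B2 (\<phi> x) (\<phi> y)"
    using iso unfolding alg_iso_def by blast
  have H1: "\<phi> (Op \<tau> a0 a1 a2 x * g y) = Op \<tau> b0 b1 b2 (\<phi> x) * g' (\<phi> y)" for x y
    using H[of x y] unfolding R1(1) R2(1) twist_def .
  have H2: "\<phi> (g x * Op \<tau> a0 a1 a2 y) = g' (\<phi> x) * Op \<tau> b0 b1 b2 (\<phi> y)" for x y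
    using H1[of y x] by (simp add: mult.commute)
  have "(a0 = 0 \<longleftrightarrow> b0 = 0) \<and> (a1 = 0 \<longleftrightarrow> b1 = 0) \<and> (a2 = 0 \<longleftrightarrow> b2 = 0)"
    by (rule iso_pattern[OF phi H1 R1(3) R1(2) refl refl])
  hence "pat i = pat j" using R1(4) R2(4) by auto
  from pat_inj[OF ij(1,2) this ij(3)] show False
  proof
    assume "i = 4 \<and> j = 5"
    then obtain x1 x2 y1 y2 where "g = Op \<tau> 0 x1 x2" "g' = Op \<tau> 1 y1 y2" using R1(5) R2(6) by blast
    from iso_pattern[OF phi H2 R1(2) R1(3) this] show False by simp
  next
    assume "i = 5 \<and> j = 4"
    then obtain x1 x2 y1 y2 where "g = Op \<tau> 1 x1 x2" "g' = Op \<tau> 0 y1 y2" using R1(6) R2(5) by blast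
    from iso_pattern[OF phi H2 R1(2) R1(3) this] show False by simp
  qed
qed

lemma Op_scale: "(\<lambda>x. \<alpha> * Op \<tau> a0 a1 a2 (x/c)) = Op \<tau> (\<alpha>*a0/c) (\<alpha>*a1/\<tau> c) (\<alpha>*a2/\<tau> (\<tau> c))"
  by (rule ext) (simp only: Op_def t_divide, simp add: divide_inverse algebra_simps)

lemma reach2:
  assumes g: "g \<in> GL F" and b: "bij (Op \<tau> a0 a1 a2)" and c: "c \<noteq> 0" and al: "\<alpha> \<noteq> 0"
    and t: "t0 = \<alpha>*a0/c" "t1 = \<alpha>*a1/\<tau> c" "t2 = \<alpha>*a2/\<tau> (\<tau> c)"
  shows "alg_iso F (twist (Op \<tau> a0 a1 a2) g) (twist (Op \<tau> t0 t1 t2) (\<lambda>x. (c/\<alpha>) * g (x/c)))"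
    "(\<lambda>x. (c/\<alpha>) * g (x/c)) \<in> GL F" "nrd_A0 \<tau> t0 t1 t2 \<noteq> 0"
proof -
  have sc: "(\<lambda>x. \<alpha> * Op \<tau> a0 a1 a2 (x/c)) = Op \<tau> t0 t1 t2" unfolding t by (rule Op_scale)
  have ab: "\<alpha> * (c/\<alpha>) = c" using al by simp
  show "alg_iso F (twist (Op \<tau> a0 a1 a2) g) (twist (Op \<tau> t0 t1 t2) (\<lambda>x. (c/\<alpha>) * g (x/c)))"
    using alg_iso_scale[OF c ab, where f="Op \<tau> a0 a1 a2" and g=g and F=F] unfolding sc .
  have eqg: "(\<lambda>x. (c/\<alpha>) * g (x/c)) = (\<lambda>u. (c/\<alpha>)*u) \<circ> g \<circ> (\<lambda>x. inverse c * x)"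
    by (rule ext) (simp add: divide_inverse mult.commute)
  show "(\<lambda>x. (c/\<alpha>) * g (x/c)) \<in> GL F" unfolding eqg
    using c al by (intro GL_comp GL_scale g) auto
  have eqf: "Op \<tau> t0 t1 t2 = (\<lambda>u. \<alpha>*u) \<circ> Op \<tau> a0 a1 a2 \<circ> (\<lambda>x. inverse c * x)"
    unfolding sc[symmetric] by (rule ext) (simp add: divide_inverse mult.commute)
  have "bij (Op \<tau> t0 t1 t2)" unfolding eqf using b bij_scale[of \<alpha>] bij_scale[of "inverse c"] al c
    by (intro bij_comp) auto
  thus "nrd_A0 \<tau> t0 t1 t2 \<noteq> 0" by (rule bij_nrd)
qed

lemma fin: "alg_iso F X B \<Longrightarrow> of_type F \<tau> M i B \<Longrightarrow> i \<in> {1..8} \<Longrightarrow>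
   \<exists>B. alg_iso F X B \<and> (\<exists>i\<in>{1..8}. of_type F \<tau> M i B)" by blast


lemma exist:
  assumes f: "f \<in> GL F" and g: "g \<in> GL F"
  shows "\<exists>B. alg_iso F (twist f g) B \<and> (\<exists>i\<in>{1..8}. of_type F \<tau> M i B)"
proof -
  obtain a0 a1 a2 where fa: "f = Op \<tau> a0 a1 a2" using span f unfolding GL_def by blast
  obtain b0 b1 b2 where gb: "g = Op \<tau> b0 b1 b2" using span g unfolding GL_def by blast
  have bf: "bij (Op \<tau> a0 a1 a2)" using f fa by (simp add: GL_def)
  have tnz: "\<tau> c \<noteq> 0" "\<tau> (\<tau> c) \<noteq> 0" if "c \<noteq> 0" for c using that by (simp_all add: t_eq0)
  have main: "\<exists>B. alg_iso F (twist (Op \<tau> a0 a1 a2) g) B \<and> (\<exists>i\<in>{1..8}. of_type F \<tau> M i B)"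
  proof (cases "a0 = 0")
    case a0: False
    show ?thesis
    proof (cases "a1 = 0")
      case a1: False
      have "a1/a0 \<noteq> 0" using a0 a1 by simp
      then obtain m where m: "m \<in> M" "nrm \<tau> ((a1/a0) * inverse m) = 1" using reps unfolding reps_def by blast
      define s where "s = inverse ((a1/a0) * inverse m)"
      have Ns: "nrm \<tau> s = 1" unfolding s_def nrm_inverse m(2) by simp
      obtain c where c: "c \<noteq> 0" "c = s * \<tau> c" using hilbert90a[OF Ns] by blast
      define \<alpha> where "\<alpha> = c/a0"
      have al: "\<alpha> \<noteq> 0" using c a0 by (simp add: \<alpha>_def)
      have t0: "1 = \<alpha>*a0/c" using c a0 by (simp add: \<alpha>_def)
      have cs: "c / \<tau> c = s" using c tnz[of c] by (metis nonzero_mult_div_cancel_right)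
      have t1: "m = \<alpha>*a1/\<tau> c"
      proof -
        have "\<alpha>*a1/\<tau> c = (c/\<tau> c)*(a1/a0)" by (simp add: \<alpha>_def divide_inverse algebra_simps)
        also have "\<dots> = m" unfolding cs s_def using a0 a1 M_nz[OF m(1)] by (simp add: field_simps)
        finally show ?thesis by simp
      qed
      show ?thesis
      proof (cases "a2 = 0")
        case a2: True
        have t2: "0 = \<alpha>*a2/\<tau> (\<tau> c)" using a2 by simp
        note R = reach2[OF g bf c(1) al t0 t1 t2]
        show ?thesis by (rule fin[OF R(1) ot3[OF R(2) m(1) R(3)]]) simp
      next
        case a2: False
        have y2: "\<alpha>*a2/\<tau> (\<tau> c) \<noteq> 0" using a2 al tnz[OF c(1)] by simp
        note R = reach2[OF g bf c(1) al t0 t1 refl]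
        show ?thesis by (rule fin[OF R(1) ot1[OF R(2) m(1) y2 R(3)]]) simp
      qed
    next
      case a1: True
      have t1: "0 = \<alpha>*a1/\<tau> c" for \<alpha> c using a1 by simp
      show ?thesis
      proof (cases "a2 = 0")
        case a2: False
        have "a2/a0 \<noteq> 0" using a0 a2 by simp
        then obtain m where m: "m \<in> M" "nrm \<tau> ((a2/a0) * inverse m) = 1" using reps unfolding reps_def by blast
        define s where "s = inverse ((a2/a0) * inverse m)"
        have Ns: "nrm \<tau> s = 1" unfolding s_def nrm_inverse m(2) by simp
        obtain c where c: "c \<noteq> 0" "c = s * \<tau> (\<tau> c)" using hilbert90b[OF Ns] by blast
        define \<alpha> where "\<alpha> = c/a0"
        have al: "\<alpha> \<noteq> 0" using c a0 by (simp add: \<alpha>_def)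
        have t0: "1 = \<alpha>*a0/c" using c a0 by (simp add: \<alpha>_def)
        have cs: "c / \<tau> (\<tau> c) = s" using c tnz[of c] by (metis nonzero_mult_div_cancel_right)
        have t2: "m = \<alpha>*a2/\<tau> (\<tau> c)"
        proof -
          have "\<alpha>*a2/\<tau> (\<tau> c) = (c/\<tau> (\<tau> c))*(a2/a0)" by (simp add: \<alpha>_def divide_inverse algebra_simps)
          also have "\<dots> = m" unfolding cs s_def using a0 a2 M_nz[OF m(1)] by (simp add: field_simps)
          finally show ?thesis by simp
        qed
        note R = reach2[OF g bf c(1) al t0 t1 t2]
        show ?thesis by (rule fin[OF R(1) ot2[OF R(2) m(1) R(3)]]) simp
      next
        case a2: True
        have t2: "0 = \<alpha>*a2/\<tau> (\<tau> c)" for \<alpha> c using a2 by simp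
        show ?thesis
        proof (cases "b0 = 0")
          case b0: False
          define c where "c = a0 * b0"
          define \<alpha> where "\<alpha> = c/a0"
          have c: "c \<noteq> 0" using a0 b0 by (simp add: c_def)
          have al: "\<alpha> \<noteq> 0" using c a0 by (simp add: \<alpha>_def)
          have t0: "1 = \<alpha>*a0/c" using c a0 by (simp add: \<alpha>_def)
          note R = reach2[OF g bf c al t0 t1 t2]
          have geq: "(\<lambda>x. (c/\<alpha>) * g (x/c)) = Op \<tau> 1 ((c/\<alpha>)*b1/\<tau> c) ((c/\<alpha>)*b2/\<tau> (\<tau> c))"
          proof -
            have "(c/\<alpha>)*b0/c = 1" using a0 b0 c by (simp add: \<alpha>_def c_def)
            thus ?thesis unfolding gb Op_scale by simp
          qed
          have G: "Op \<tau> 1 ((c/\<alpha>)*b1/\<tau> c) ((c/\<alpha>)*b2/\<tau> (\<tau> c)) \<in> GL F" using R(2) unfolding geq .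
          have N: "nrd_A0 \<tau> 1 ((c/\<alpha>)*b1/\<tau> c) ((c/\<alpha>)*b2/\<tau> (\<tau> c)) \<noteq> 0"
            using G by (intro bij_nrd) (simp add: GL_def)
          show ?thesis using fin[OF R(1)[unfolded geq] ot5[OF G N]] by simp
        next
          case b0: True
          define c :: 'k where "c = 1"
          define \<alpha> where "\<alpha> = c/a0"
          have c: "c \<noteq> 0" by (simp add: c_def)
          have al: "\<alpha> \<noteq> 0" using c a0 by (simp add: \<alpha>_def)
          have t0: "1 = \<alpha>*a0/c" using c a0 by (simp add: \<alpha>_def)
          note R = reach2[OF g bf c al t0 t1 t2]
          have geq: "(\<lambda>x. (c/\<alpha>) * g (x/c)) = Op \<tau> 0 ((c/\<alpha>)*b1/\<tau> c) ((c/\<alpha>)*b2/\<tau> (\<tau> c))"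
            unfolding gb Op_scale using b0 by simp
          have G: "Op \<tau> 0 ((c/\<alpha>)*b1/\<tau> c) ((c/\<alpha>)*b2/\<tau> (\<tau> c)) \<in> GL F" using R(2) unfolding geq .
          have N: "nrd_A0 \<tau> 0 ((c/\<alpha>)*b1/\<tau> c) ((c/\<alpha>)*b2/\<tau> (\<tau> c)) \<noteq> 0"
            using G by (intro bij_nrd) (simp add: GL_def)
          show ?thesis using fin[OF R(1)[unfolded geq] ot4[OF G N]] by simp
        qed
      qed
    qed
  next
    case a0: True
    define c :: 'k where "c = 1"
    have c: "c \<noteq> 0" by (simp add: c_def)
    have tc: "\<tau> c = 1" "\<tau> (\<tau> c) = 1" by (simp_all add: c_def t_one)
    have t0: "0 = \<alpha>*a0/c" for \<alpha> using a0 by simp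
    show ?thesis
    proof (cases "a1 = 0")
      case a1: False
      define \<alpha> where "\<alpha> = 1/a1"
      have al: "\<alpha> \<noteq> 0" using a1 by (simp add: \<alpha>_def)
      have t1: "1 = \<alpha>*a1/\<tau> c" using a1 tc by (simp add: \<alpha>_def)
      show ?thesis
      proof (cases "a2 = 0")
        case a2: True
        have t2: "0 = \<alpha>*a2/\<tau> (\<tau> c)" using a2 by simp
        note R = reach2[OF g bf c al t0 t1 t2]
        show ?thesis by (rule fin[OF R(1) ot8[OF R(2) oneM]]) simp
      next
        case a2: False
        have y2: "\<alpha>*a2/\<tau> (\<tau> c) \<noteq> 0" using a2 al tc by simp
        note R = reach2[OF g bf c al t0 t1 refl]
        show ?thesis by (rule fin[OF R(1) ot6[OF R(2) oneM y2 R(3)]]) simp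
      qed
    next
      case a1: True
      have t1: "0 = \<alpha>*a1/\<tau> c" for \<alpha> using a1 by simp
      show ?thesis
      proof (cases "a2 = 0")
        case a2: True
        have "nrd_A0 \<tau> a0 a1 a2 = 0" using a0 a1 a2 by (simp add: nrd_A0_def det3_def)
        with bij_nrd[OF bf] show ?thesis by simp
      next
        case a2: False
        define \<alpha> where "\<alpha> = 1/a2"
        have al: "\<alpha> \<noteq> 0" using a2 by (simp add: \<alpha>_def)
        have t2: "1 = \<alpha>*a2/\<tau> (\<tau> c)" using a2 tc by (simp add: \<alpha>_def)
        note R = reach2[OF g bf c al t0 t1 t2]
        show ?thesis by (rule fin[OF R(1) ot7[OF R(2) oneM]]) simp
      qed
    qed
  qed
  thus ?thesis using fa by simp
qed

end

theorem mainTheorem15: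
  fixes F :: "'k::field set" and \<tau> :: "'k \<Rightarrow> 'k" and M :: "'k set"
  assumes "is_subfield F"
    and "dim3_over F"
    and "\<tau> \<in> Gal F"
    and "Gal F = {id, \<tau>, \<tau> \<circ> \<tau>}"
    and "card {id, \<tau>, \<tau> \<circ> \<tau>} = 3"
    and "reps \<tau> M"
  shows "(\<forall>f g A. f \<in> GL F \<and> g \<in> GL F \<and> alg_iso F A (twist f g) \<longrightarrow>
            (\<exists>B. alg_iso F A B \<and> (\<exists>i\<in>{1..8}. of_type F \<tau> M i B)))
       \<and> (\<forall>i j B1 B2. i \<in> {1..8} \<and> j \<in> {1..8} \<and> i \<noteq> j \<and>
            of_type F \<tau> M i B1 \<and> of_type F \<tau> M j B2 \<longrightarrow> \<not> alg_iso F B1 B2)"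
proof -
  interpret cyc F \<tau> M using assms by unfold_locales
  show ?thesis
  proof (intro conjI allI impI)
    fix f g A assume H: "f \<in> GL F \<and> g \<in> GL F \<and> alg_iso F A (twist f g)"
    then obtain B where B: "alg_iso F (twist f g) B" "\<exists>i\<in>{1..8}. of_type F \<tau> M i B" using exist by blast
    thus "\<exists>B. alg_iso F A B \<and> (\<exists>i\<in>{1..8}. of_type F \<tau> M i B)" using H alg_iso_trans by blast
  next
    fix i j B1 B2 assume "i \<in> {1..8} \<and> j \<in> {1..8} \<and> i \<noteq> j \<and> of_type F \<tau> M i B1 \<and> of_type F \<tau> M j B2"
    thus "\<not> alg_iso F B1 B2" using noniso by blast
  qed
qed

end
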